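(* For every $f\in L^{\infty}(\mathbb{R}_+)$, $\overline{M}_1(f)\le\overline{R}(f)$.
   Context: $L^{\infty}(\mathbb{R}_+)$: real-valued essentially bounded measurable functions on $[0,\infty)$. $\overline{M}_1(f)=\lim_{\theta\to\infty}\limsup_{x\to\infty}\frac1\theta\int_x^{x+\theta}f(t)\,dt$ and $\overline{R}(f)=\limsup_{x\to\infty}e^{-x}\int_0^xf(t)e^t\,dt$. *)

theory Defs
  imports "HOL-Analysis.Analysis"
begin

text \<open>Real-valued essentially bounded (Lebesgue-)measurable functions on [0,\<infinity>).
  Values of f at negative arguments are irrelevant.\<close>
definition Linf_Rplus :: "(real \<Rightarrow> real) set" where
  "Linf_Rplus = {f. f \<in> borel_measurable (restrict_space lebesgue {0..}) \<and>
      (\<exists>C. AE t in lebesgue. t \<ge> 0 \<longrightarrow> \<bar>f t\<bar> \<le> C)}"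

definition M1_upper :: "(real \<Rightarrow> real) \<Rightarrow> ereal" where
  "M1_upper f = Lim at_top (\<lambda>\<theta>::real. Limsup at_top
      (\<lambda>x::real. ereal ((1 / \<theta>) * (LINT t:{x..x+\<theta>}|lebesgue. f t))))"

definition R_upper :: "(real \<Rightarrow> real) \<Rightarrow> ereal" where
  "R_upper f = Limsup at_top
      (\<lambda>x::real. ereal (exp (- x) * (LINT t:{0..x}|lebesgue. f t * exp t)))"

end

theory Submission imports Defs begin

lemma pair_lborel: "pair_sigma_finite lborel (lborel::real measure)"
  by (simp add: pair_sigma_finite_def lborel.sigma_finite_measure_axioms)

lemma integrable_box_bound:
  fixes h :: "real \<Rightarrow> real"
  assumes [measurable]: "h \<in> borel_measurable borel" and hb: "\<And>t. \<bar>h t\<bar> \<le> C"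
  shows "integrable lborel (\<lambda>s. if a \<le> s \<and> s \<le> b then h s else 0)"
proof (rule Bochner_Integration.integrable_bound)
  show "integrable lborel (\<lambda>s. C * indicator {a..b} s)"
    by (intro integrable_mult_right integrable_real_indicator) (auto simp: emeasure_lborel_Icc_eq)
  show "(\<lambda>s. if a \<le> s \<and> s \<le> b then h s else 0) \<in> borel_measurable lborel" by measurable
  show "AE s in lborel. norm (if a \<le> s \<and> s \<le> b then h s else 0) \<le> norm (C * indicator {a..b} s)"
    using hb[of 0] by (auto simp: indicator_def abs_le_iff intro!: AE_I2 dest: spec) (use hb in \<open>auto simp: abs_le_iff\<close>)
qed

lemma FTC_exp:
  fixes a b :: real
  assumes "a \<le> b"
  shows "(LINT t|lborel. (if a \<le> t \<and> t \<le> b then exp (- t) else 0)) = exp (- a) - exp (- b)"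
proof -
  have "(LINT t|lborel. indicator {a..b} t *\<^sub>R exp (- t)) = (- exp (- b)) - (- exp (- a))"
  proof (rule integral_FTC_atLeastAtMost[of a b "\<lambda>t. - exp(-t)" "\<lambda>t. exp(-t)"])
    show "a \<le> b" by fact
    fix x assume "a \<le> x" "x \<le> b"
    show "((\<lambda>t. - exp (- t)) has_vector_derivative exp (- x)) (at x within {a..b})"
      unfolding has_real_derivative_iff_has_vector_derivative[symmetric]
      by (auto intro!: derivative_eq_intros)
  next
    show "continuous_on {a..b} (\<lambda>t. exp (- t))" by (intro continuous_intros)
  qed
  moreover have "(\<lambda>t. indicator {a..b} t *\<^sub>R exp (- t)) = (\<lambda>t. if a \<le> t \<and> t \<le> b then exp (- t) else 0)"
    by (auto simp: indicator_def)
  ultimately show ?thesis by simp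
qed


lemma key_identity:
  fixes h :: "real \<Rightarrow> real" and x \<theta> C :: real
  assumes hm[measurable]: "h \<in> borel_measurable borel" and hb: "\<And>t. \<bar>h t\<bar> \<le> C"
    and x: "0 \<le> x" "0 \<le> \<theta>"
  defines "P \<equiv> \<lambda>t. LINT s|lborel. (if 0 \<le> s \<and> s \<le> t then h s * exp s else 0)"
  defines "Fx \<equiv> \<lambda>t. exp (- t) * P t"
  shows "integrable lborel (\<lambda>t. if x \<le> t \<and> t \<le> x + \<theta> then Fx t else 0)"
    and "(LINT t|lborel. (if x \<le> t \<and> t \<le> x + \<theta> then h t else 0))
           = Fx (x + \<theta>) - Fx x + (LINT t|lborel. (if x \<le> t \<and> t \<le> x + \<theta> then Fx t else 0))"
proof -
  interpret pair_sigma_finite lborel "lborel :: real measure" by (rule pair_lborel)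
  define k where "k = (\<lambda>s t::real. if x \<le> t \<and> t \<le> x + \<theta> \<and> 0 \<le> s \<and> s \<le> t then h s * exp s * exp (- t) else 0)"
  have C0: "0 \<le> C" using hb[of 0] by simp
  have kint: "integrable (lborel \<Otimes>\<^sub>M lborel) (case_prod k)"
  proof (rule Bochner_Integration.integrable_bound)
    show "integrable (lborel \<Otimes>\<^sub>M lborel) (\<lambda>p. C * indicator ({0..x+\<theta>} \<times> {x..x+\<theta>}) p)"
      by (intro integrable_mult_right integrable_real_indicator)
         (auto simp: lborel.emeasure_pair_measure_Times emeasure_lborel_Icc_eq ennreal_mult_less_top)
    show "case_prod k \<in> borel_measurable (lborel \<Otimes>\<^sub>M lborel)"
      unfolding k_def by measurable
    show "AE p in lborel \<Otimes>\<^sub>M lborel. norm (case_prod k p) \<le> norm (C * indicator ({0..x+\<theta>} \<times> {x..x+\<theta>}) p)"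
    proof (rule AE_I2, clarify)
      fix s t :: real
      show "norm (k s t) \<le> norm (C * indicator ({0..x+\<theta>} \<times> {x..x+\<theta>}) (s, t))"
      proof (cases "x \<le> t \<and> t \<le> x + \<theta> \<and> 0 \<le> s \<and> s \<le> t")
        case True
        have "exp s * exp (- t) \<le> 1" using True by (simp add: exp_minus_inverse[symmetric] exp_add[symmetric])
        have "\<bar>h s * exp s * exp (- t)\<bar> = \<bar>h s\<bar> * (exp s * exp (- t))" by (simp add: abs_mult)
        also have "\<dots> \<le> C * 1" by (intro mult_mono hb) (use \<open>exp s * exp (- t) \<le> 1\<close> C0 in auto)
        finally show ?thesis using True C0 by (auto simp: k_def indicator_def)
      qed (auto simp: k_def indicator_def C0)
    qed
  qed
  have inner_s: "(LINT s|lborel. k s t) = (if x \<le> t \<and> t \<le> x + \<theta> then Fx t else 0)" for t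
  proof (cases "x \<le> t \<and> t \<le> x + \<theta>")
    case True
    then have "(\<lambda>s. k s t) = (\<lambda>s. exp (- t) * (if 0 \<le> s \<and> s \<le> t then h s * exp s else 0))"
      by (auto simp: k_def fun_eq_iff)
    then show ?thesis using True by (simp add: Fx_def P_def)
  qed (auto simp: k_def)
  define \<psi> where "\<psi> = (\<lambda>s. if 0 \<le> s \<and> s \<le> x + \<theta> then exp (- max s x) - exp (- (x + \<theta>)) else 0)"
  have inner_t: "(LINT t|lborel. k s t) = h s * exp s * \<psi> s" for s
  proof (cases "0 \<le> s \<and> s \<le> x + \<theta>")
    case True
    then have "(\<lambda>t. k s t) = (\<lambda>t. h s * exp s * (if max s x \<le> t \<and> t \<le> x + \<theta> then exp (- t) else 0))"
      by (auto simp: k_def fun_eq_iff)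
    moreover have "max s x \<le> x + \<theta>" using True x by auto
    ultimately show ?thesis using True FTC_exp[OF \<open>max s x \<le> x + \<theta>\<close>]
      by (simp add: \<psi>_def integral_mult_right_zero del: max.bounded_iff)
  next
    case False
    then have "(\<lambda>t. k s t) = (\<lambda>t. 0)" by (auto simp: k_def fun_eq_iff)
    moreover have "\<psi> s = 0" using False unfolding \<psi>_def by auto
    ultimately show ?thesis by simp
  qed
  have fub: "(LINT t|lborel. LINT s|lborel. k s t) = (LINT s|lborel. LINT t|lborel. k s t)"
    by (rule pair_sigma_finite.Fubini_integral[OF pair_lborel kint])
  show int1: "integrable lborel (\<lambda>t. if x \<le> t \<and> t \<le> x + \<theta> then Fx t else 0)"
    using pair_sigma_finite.integrable_snd[OF pair_lborel kint] by (simp add: inner_s)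
  have hexp_int: "integrable lborel (\<lambda>s. if 0 \<le> s \<and> s \<le> b then h s * exp s else 0)" for b
  proof (rule Bochner_Integration.integrable_bound)
    show "integrable lborel (\<lambda>s. C * exp b * indicator {0..b} s)"
      by (intro integrable_mult_right integrable_real_indicator) (auto simp: emeasure_lborel_Icc_eq)
    show "(\<lambda>s. if 0 \<le> s \<and> s \<le> b then h s * exp s else 0) \<in> borel_measurable lborel" by measurable
    show "AE s in lborel. norm (if 0 \<le> s \<and> s \<le> b then h s * exp s else 0) \<le> norm (C * exp b * indicator {0..b} s)"
    proof (rule AE_I2)
      fix s
      show "norm (if 0 \<le> s \<and> s \<le> b then h s * exp s else 0) \<le> norm (C * exp b * indicator {0..b} s)"
      proof (cases "0 \<le> s \<and> s \<le> b")
        case True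
        have "\<bar>h s * exp s\<bar> = \<bar>h s\<bar> * exp s" by (simp add: abs_mult)
        also have "\<dots> \<le> C * exp b" by (intro mult_mono hb) (use True C0 in auto)
        finally show ?thesis using True C0 by (auto simp: indicator_def)
      qed (auto simp: indicator_def)
    qed
  qed
  have hint2: "integrable lborel (\<lambda>s. if x < s \<and> s \<le> x + \<theta> then h s else 0)"
  proof -
    have "integrable lborel (\<lambda>s. if x \<le> s \<and> s \<le> x + \<theta> then h s else 0)"
      by (rule integrable_box_bound[OF hm hb])
    moreover have "(\<lambda>s. if x < s \<and> s \<le> x + \<theta> then h s else 0) = (\<lambda>s. (if x \<le> s \<and> s \<le> x + \<theta> then h s else 0) * indicator {x<..} s)"
      by (auto simp: indicator_def fun_eq_iff)
    ultimately show ?thesis using integrable_real_mult_indicator[of "{x<..}" lborel] by auto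
  qed
  have pw: "h s * exp s * \<psi> s = exp (- x) * (if 0 \<le> s \<and> s \<le> x then h s * exp s else 0)
      + (if x < s \<and> s \<le> x + \<theta> then h s else 0)
      - exp (- (x + \<theta>)) * (if 0 \<le> s \<and> s \<le> x + \<theta> then h s * exp s else 0)" for s
    using x by (auto simp: \<psi>_def max_def algebra_simps exp_minus_inverse[symmetric] exp_add[symmetric])
  have "(LINT s|lborel. h s * exp s * \<psi> s) =
      exp (- x) * P x + (LINT s|lborel. (if x < s \<and> s \<le> x + \<theta> then h s else 0)) - exp (- (x + \<theta>)) * P (x + \<theta>)"
    unfolding pw P_def
    by (subst Bochner_Integration.integral_diff Bochner_Integration.integral_add, (intro integrable_mult_right hexp_int hint2 Bochner_Integration.integrable_add)+)+ simp
  also have "(LINT s|lborel. (if x < s \<and> s \<le> x + \<theta> then h s else 0)) = (LINT s|lborel. (if x \<le> s \<and> s \<le> x + \<theta> then h s else 0))"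
    by (rule integral_cong_AE) (auto intro!: eventually_mono[OF AE_lborel_singleton[of x]])
  finally have "(LINT s|lborel. h s * exp s * \<psi> s) = Fx x + (LINT s|lborel. (if x \<le> s \<and> s \<le> x + \<theta> then h s else 0)) - Fx (x + \<theta>)"
    by (simp add: Fx_def)
  with fub show "(LINT t|lborel. (if x \<le> t \<and> t \<le> x + \<theta> then h t else 0))
           = Fx (x + \<theta>) - Fx x + (LINT t|lborel. (if x \<le> t \<and> t \<le> x + \<theta> then Fx t else 0))"
    by (simp add: inner_s inner_t)
qed


lemma limsup_fin:
  fixes u :: "real \<Rightarrow> real"
  assumes ev: "eventually (\<lambda>x. \<bar>u x\<bar> \<le> B) at_top"
  shows "Limsup at_top (\<lambda>x. ereal (u x)) = ereal (real_of_ereal (Limsup at_top (\<lambda>x. ereal (u x))))"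
    and "\<bar>real_of_ereal (Limsup at_top (\<lambda>x. ereal (u x)))\<bar> \<le> B"
proof -
  let ?L = "Limsup at_top (\<lambda>x. ereal (u x))"
  have up: "?L \<le> ereal B"
    by (rule Limsup_bounded) (use ev in \<open>auto elim!: eventually_mono\<close>)
  have lo: "ereal (- B) \<le> ?L"
    by (rule le_Limsup) (use ev in \<open>auto elim!: eventually_mono\<close>)
  have fin: "\<bar>?L\<bar> \<noteq> \<infinity>" using up lo by auto
  show "?L = ereal (real_of_ereal ?L)" using fin by (simp add: ereal_real')
  show "\<bar>real_of_ereal ?L\<bar> \<le> B"
    using up lo fin by (cases ?L) auto
qed


lemma abstract_main:
  fixes I :: "real \<Rightarrow> real \<Rightarrow> real" and Fx :: "real \<Rightarrow> real" and C :: real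
  assumes C: "0 < C"
  and Ib: "\<And>x \<theta>. 0 \<le> x \<Longrightarrow> 0 \<le> \<theta> \<Longrightarrow> \<bar>I x \<theta>\<bar> \<le> C * \<theta>"
  and Iadd: "\<And>x a b. 0 \<le> x \<Longrightarrow> 0 \<le> a \<Longrightarrow> 0 \<le> b \<Longrightarrow> I x (a + b) = I x a + I (x + a) b"
  and Fb: "\<And>t. 0 \<le> t \<Longrightarrow> \<bar>Fx t\<bar> \<le> C"
  and IF: "\<And>x0 c x \<theta>. 0 \<le> x0 \<Longrightarrow> (\<And>t. x0 \<le> t \<Longrightarrow> Fx t \<le> c) \<Longrightarrow> x0 \<le> x \<Longrightarrow> 0 \<le> \<theta> \<Longrightarrow> I x \<theta> \<le> 2*C + c*\<theta>"
  shows "Lim at_top (\<lambda>\<theta>. Limsup at_top (\<lambda>x. ereal ((1/\<theta>) * I x \<theta>))) \<le> Limsup at_top (\<lambda>x. ereal (Fx x))"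
proof -
  define G where "G \<theta> = Limsup at_top (\<lambda>x. ereal ((1/\<theta>) * I x \<theta>))" for \<theta>
  define R where "R = Limsup at_top (\<lambda>x. ereal (Fx x))"
  define Gr where "Gr \<theta> = real_of_ereal (G \<theta>)" for \<theta>
  define r where "r = real_of_ereal R"
  have evG: "eventually (\<lambda>x. \<bar>(1/\<theta>) * I x \<theta>\<bar> \<le> C) at_top" if "0 < \<theta>" for \<theta>
    using eventually_ge_at_top[of 0]
  proof eventually_elim
    case (elim x)
    have "\<bar>I x \<theta>\<bar> \<le> C * \<theta>" using Ib[OF elim] that by simp
    then show ?case using that by (simp add: abs_mult divide_simps mult.commute)
  qed
  have GGr: "G \<theta> = ereal (Gr \<theta>)" and Grb: "\<bar>Gr \<theta>\<bar> \<le> C" if "0 < \<theta>" for \<theta>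
    using limsup_fin[OF evG[OF that]] unfolding G_def Gr_def by auto
  have evF: "eventually (\<lambda>x. \<bar>Fx x\<bar> \<le> C) at_top"
    using eventually_ge_at_top[of 0] by eventually_elim (rule Fb)
  have RR: "R = ereal r" and rb: "\<bar>r\<bar> \<le> C"
    using limsup_fin[OF evF] unfolding R_def r_def by auto
  have Gup: "Gr \<theta> \<le> r + 2*C/\<theta>" if th: "0 < \<theta>" for \<theta>
  proof (rule field_le_epsilon)
    fix e :: real assume e: "0 < e"
    have "R < ereal (r + e)" using RR e by simp
    then have "eventually (\<lambda>x. ereal (Fx x) < ereal (r + e)) at_top"
      unfolding R_def by (rule Limsup_lessD)
    then obtain x1 where x1: "\<And>x. x \<ge> x1 \<Longrightarrow> Fx x < r + e"
      by (auto simp: eventually_at_top_linorder)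
    define x0 where "x0 = max x1 0"
    have "eventually (\<lambda>x. ereal ((1/\<theta>) * I x \<theta>) \<le> ereal (r + 2*C/\<theta> + e)) at_top"
      using eventually_ge_at_top[of x0]
    proof eventually_elim
      case (elim x)
      have "I x \<theta> \<le> 2*C + (r+e)*\<theta>"
        by (rule IF[of x0]) (use x1 elim th in \<open>auto simp: x0_def intro: less_imp_le\<close>)
      then have "(1/\<theta>) * I x \<theta> \<le> (1/\<theta>) * (2*C + (r+e)*\<theta>)"
        using th by (intro mult_left_mono) auto
      also have "\<dots> = r + 2*C/\<theta> + e" using th by (simp add: field_simps)
      finally show ?case by simp
    qed
    then have "G \<theta> \<le> ereal (r + 2*C/\<theta> + e)" unfolding G_def by (rule Limsup_bounded)
    then show "Gr \<theta> \<le> r + 2*C/\<theta> + e" using GGr[OF th] by simp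
  qed
  have sub: "\<exists>T. \<forall>\<theta>\<ge>T. Gr \<theta> \<le> Gr a + e" if a: "0 < a" and e: "0 < e" for a e
  proof -
    define \<delta> where "\<delta> = min (e/2) 1"
    have \<delta>: "0 < \<delta>" "\<delta> \<le> e/2" "\<delta> \<le> 1" using e by (auto simp: \<delta>_def)
    have "G a < ereal (Gr a + \<delta>)" using GGr[OF a] \<delta> by simp
    then have "eventually (\<lambda>x. ereal ((1/a) * I x a) < ereal (Gr a + \<delta>)) at_top"
      unfolding G_def by (rule Limsup_lessD)
    then obtain x1 where x1: "\<And>x. x \<ge> x1 \<Longrightarrow> (1/a) * I x a < Gr a + \<delta>"
      by (auto simp: eventually_at_top_linorder)
    define x0 where "x0 = max x1 0"
    have Ia: "I x a \<le> a * (Gr a + \<delta>)" if "x0 \<le> x" for x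
    proof -
      have "(1/a) * I x a < Gr a + \<delta>" using x1 that by (auto simp: x0_def)
      then show ?thesis using a by (simp add: field_simps)
    qed
    have ind: "I x (real n * a + s) \<le> real n * a * (Gr a + \<delta>) + C * s"
      if "x0 \<le> x" "0 \<le> s" for n x s
      using that
    proof (induction n arbitrary: x)
      case 0
      then have "\<bar>I x s\<bar> \<le> C * s" using Ib[of x s] by (auto simp: x0_def)
      then show ?case by simp
    next
      case (Suc n)
      have x0: "0 \<le> x" using Suc.prems by (auto simp: x0_def)
      have "I x (real (Suc n) * a + s) = I x (a + (real n * a + s))" by (simp add: algebra_simps)
      also have "\<dots> = I x a + I (x + a) (real n * a + s)"
        by (rule Iadd) (use x0 a Suc.prems in auto)
      also have "\<dots> \<le> a * (Gr a + \<delta>) + (real n * a * (Gr a + \<delta>) + C * s)"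
        by (intro add_mono Ia Suc.IH) (use Suc.prems a in auto)
      finally show ?case by (simp add: algebra_simps)
    qed
    define T where "T = a + 2 * a * (2*C + 1) / e"
    have "0 \<le> 2 * a * (2*C + 1) / e" using a e C by simp
    then have T: "a \<le> T" "0 < T" using a by (auto simp: T_def)
    show ?thesis
    proof (intro exI allI impI)
      fix \<theta> assume th: "T \<le> \<theta>"
      have th0: "0 < \<theta>" "a \<le> \<theta>" using T th by auto
      define n where "n = nat \<lfloor>\<theta>/a\<rfloor>"
      have fl0: "0 \<le> \<lfloor>\<theta>/a\<rfloor>" using th0 a by simp
      have n1: "real n \<le> \<theta>/a" using fl0 by (simp add: n_def of_nat_nat) 
      have n2: "\<theta>/a < real n + 1" using fl0 by (simp add: n_def of_nat_nat)
      have na1: "real n * a \<le> \<theta>" using n1 a by (simp add: field_simps)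
      have na2: "\<theta> < real n * a + a" using n2 a by (simp add: field_simps)
      define s where "s = \<theta> - real n * a"
      have s: "0 \<le> s" "s \<le> a" using na1 na2 by (auto simp: s_def)
      define q where "q = real n * a / \<theta>"
      have q1: "q \<le> 1" using na1 th0 by (auto simp: q_def field_simps)
      have "1 - q = s / \<theta>" using th0 by (simp add: q_def s_def field_simps)
      also have "\<dots> \<le> a / \<theta>" using s th0 by (intro divide_right_mono) auto
      finally have q: "q \<le> 1" "1 - q \<le> a / \<theta>" using q1 by auto
      have GA: "\<bar>Gr a + \<delta>\<bar> \<le> C + 1" using Grb[OF a] \<delta> by auto
      have "(1 - q) * (- (Gr a + \<delta>)) \<le> (a / \<theta>) * (C + 1)"
      proof -
        have "(1 - q) * (- (Gr a + \<delta>)) \<le> (1 - q) * (C + 1)"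
          using q GA by (intro mult_left_mono) auto
        also have "\<dots> \<le> (a / \<theta>) * (C + 1)" using q C by (intro mult_right_mono) auto
        finally show ?thesis .
      qed
      then have qb: "q * (Gr a + \<delta>) \<le> Gr a + \<delta> + (a / \<theta>) * (C + 1)" by (simp add: algebra_simps)
      have "eventually (\<lambda>x. ereal ((1/\<theta>) * I x \<theta>) \<le> ereal (Gr a + e)) at_top"
        using eventually_ge_at_top[of x0]
      proof eventually_elim
        case (elim x)
        have "I x \<theta> = I x (real n * a + s)" by (simp add: s_def)
        also have "\<dots> \<le> real n * a * (Gr a + \<delta>) + C * s" by (rule ind[OF elim s(1)])
        also have "\<dots> \<le> real n * a * (Gr a + \<delta>) + C * a" using s C by simp
        finally have "(1/\<theta>) * I x \<theta> \<le> (1/\<theta>) * (real n * a * (Gr a + \<delta>) + C * a)"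
          using th0 by (intro mult_left_mono) auto
        also have "\<dots> = q * (Gr a + \<delta>) + (a / \<theta>) * C" using th0 by (simp add: q_def field_simps)
        also have "\<dots> \<le> Gr a + \<delta> + (a / \<theta>) * (2 * C + 1)" using qb by (simp add: distrib_left) argo
        also have "(a / \<theta>) * (2 * C + 1) \<le> e / 2"
        proof -
          have "2 * a * (2*C + 1) / e \<le> \<theta>" using th a by (simp add: T_def)
          then have "2 * a * (2*C + 1) \<le> \<theta> * e" using e by (simp add: field_simps)
          then show ?thesis using th0 e by (simp add: field_simps)
        qed
        finally show ?case using \<delta> by simp
      qed
      then have "G \<theta> \<le> ereal (Gr a + e)" unfolding G_def by (rule Limsup_bounded)
      then show "Gr \<theta> \<le> Gr a + e" using GGr[OF th0(1)] by simp
    qed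
  qed
  define Ls where "Ls = Limsup at_top G"
  have Ls_le: "Ls \<le> G a" if a: "0 < a" for a
  proof -
    have "Ls \<le> ereal (Gr a) + ereal e" if e: "0 < e" for e
    proof -
      obtain T where T: "\<And>\<theta>. \<theta> \<ge> T \<Longrightarrow> Gr \<theta> \<le> Gr a + e" using sub[OF a e] by blast
      have "eventually (\<lambda>\<theta>. G \<theta> \<le> ereal (Gr a + e)) at_top"
        using eventually_ge_at_top[of "max T 1"]
        by eventually_elim (use T GGr in \<open>auto\<close>)
      then show ?thesis unfolding Ls_def by (simp add: Limsup_bounded)
    qed
    then have "Ls \<le> ereal (Gr a)" by (rule ereal_le_epsilon2)
    then show ?thesis using GGr[OF a] by simp
  qed
  have "Ls \<le> Liminf at_top G"
    by (rule Liminf_bounded, rule eventually_mono[OF eventually_gt_at_top[of 0]]) (rule Ls_le)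
  moreover have "Liminf at_top G \<le> Ls" unfolding Ls_def by (rule Liminf_le_Limsup) simp
  ultimately have "(G \<longlongrightarrow> Ls) at_top"
    by (intro Liminf_eq_Limsup) (auto simp: Ls_def)
  then have LimG: "Lim at_top G = Ls" by (intro tendsto_Lim) auto
  have "Ls \<le> R"
  proof -
    have "Ls \<le> ereal r + ereal e" if e: "0 < e" for e
    proof -
      have "eventually (\<lambda>\<theta>. G \<theta> \<le> ereal (r + e)) at_top"
        using eventually_ge_at_top[of "max 1 (2*C/e)"]
      proof eventually_elim
        case (elim \<theta>)
        then have th: "0 < \<theta>" "2*C/e \<le> \<theta>" by auto
        have "2*C/\<theta> \<le> e" using th e by (simp add: field_simps)
        then show ?case using Gup[OF th(1)] GGr[OF th(1)] by simp
      qed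
      then show ?thesis unfolding Ls_def by (simp add: Limsup_bounded)
    qed
    then have "Ls \<le> ereal r" by (rule ereal_le_epsilon2)
    then show ?thesis using RR by simp
  qed
  then show ?thesis using LimG unfolding G_def R_def by simp
qed


lemma FTC_exp_pos:
  fixes a b :: real
  assumes "a \<le> b"
  shows "(LINT t|lborel. (if a \<le> t \<and> t \<le> b then exp t else 0)) = exp b - exp a"
proof -
  have "(LINT t|lborel. indicator {a..b} t *\<^sub>R exp t) = exp b - exp a"
  proof (rule integral_FTC_atLeastAtMost[of a b "\<lambda>t. exp t" "\<lambda>t. exp t"])
    show "a \<le> b" by fact
    fix x assume "a \<le> x" "x \<le> b"
    show "((\<lambda>t. exp t) has_vector_derivative exp x) (at x within {a..b})"
      unfolding has_real_derivative_iff_has_vector_derivative[symmetric]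
      by (auto intro!: derivative_eq_intros)
  next
    show "continuous_on {a..b} (\<lambda>t. exp t)" by (intro continuous_intros)
  qed
  moreover have "(\<lambda>t. indicator {a..b} t *\<^sub>R exp t) = (\<lambda>t. if a \<le> t \<and> t \<le> b then exp t else 0)"
    by (auto simp: indicator_def)
  ultimately show ?thesis by simp
qed

lemma hexp_integrable:
  fixes h :: "real \<Rightarrow> real"
  assumes hm[measurable]: "h \<in> borel_measurable borel" and hb: "\<And>t. \<bar>h t\<bar> \<le> C"
  shows "integrable lborel (\<lambda>s. if 0 \<le> s \<and> s \<le> b then h s * exp s else 0)"
proof (rule Bochner_Integration.integrable_bound)
  have C0: "0 \<le> C" using hb[of 0] by simp
  show "integrable lborel (\<lambda>s. C * exp b * indicator {0..b} s)"
    by (intro integrable_mult_right integrable_real_indicator) (auto simp: emeasure_lborel_Icc_eq)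
  show "(\<lambda>s. if 0 \<le> s \<and> s \<le> b then h s * exp s else 0) \<in> borel_measurable lborel" by measurable
  show "AE s in lborel. norm (if 0 \<le> s \<and> s \<le> b then h s * exp s else 0) \<le> norm (C * exp b * indicator {0..b} s)"
  proof (rule AE_I2)
    fix s
    show "norm (if 0 \<le> s \<and> s \<le> b then h s * exp s else 0) \<le> norm (C * exp b * indicator {0..b} s)"
    proof (cases "0 \<le> s \<and> s \<le> b")
      case True
      have "\<bar>h s * exp s\<bar> = \<bar>h s\<bar> * exp s" by (simp add: abs_mult)
      also have "\<dots> \<le> C * exp b" by (intro mult_mono hb) (use True C0 in auto)
      finally show ?thesis using True C0 by (auto simp: indicator_def)
    qed (auto simp: indicator_def)
  qed
qed

lemma Fx_bound:
  fixes h :: "real \<Rightarrow> real"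
  assumes hm[measurable]: "h \<in> borel_measurable borel" and hb: "\<And>t. \<bar>h t\<bar> \<le> C"
  shows "\<bar>exp (- t) * (LINT s|lborel. (if 0 \<le> s \<and> s \<le> t then h s * exp s else 0))\<bar> \<le> C"
proof (cases "0 \<le> t")
  case False
  then have "(\<lambda>s. if 0 \<le> s \<and> s \<le> t then h s * exp s else 0) = (\<lambda>s. 0)" by auto
  then show ?thesis using hb[of 0] by simp
next
  case True
  have C0: "0 \<le> C" using hb[of 0] by simp
  have hc: "\<bar>(\<lambda>_. C) t\<bar> \<le> C" for t using C0 by simp
  have "\<bar>LINT s|lborel. (if 0 \<le> s \<and> s \<le> t then h s * exp s else 0)\<bar>
      \<le> (LINT s|lborel. \<bar>if 0 \<le> s \<and> s \<le> t then h s * exp s else 0\<bar>)"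
    by (rule integral_abs_bound)
  also have "\<dots> \<le> (LINT s|lborel. (if 0 \<le> s \<and> s \<le> t then C * exp s else 0))"
  proof (rule integral_mono)
    show "integrable lborel (\<lambda>s. \<bar>if 0 \<le> s \<and> s \<le> t then h s * exp s else 0\<bar>)"
      by (intro integrable_abs hexp_integrable[OF hm hb])
    show "integrable lborel (\<lambda>s. if 0 \<le> s \<and> s \<le> t then C * exp s else 0)"
      using hexp_integrable[of "\<lambda>_. C" C t] C0 by simp
    fix s
    show "\<bar>if 0 \<le> s \<and> s \<le> t then h s * exp s else 0\<bar> \<le> (if 0 \<le> s \<and> s \<le> t then C * exp s else 0)"
      using hb[of s] by (auto simp: abs_mult)
  qed
  also have "(\<lambda>s. if 0 \<le> s \<and> s \<le> t then C * exp s else 0) = (\<lambda>s. C * (if 0 \<le> s \<and> s \<le> t then exp s else 0))"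
    by auto
  also have "(LINT s|lborel. C * (if 0 \<le> s \<and> s \<le> t then exp s else 0)) = C * (exp t - 1)"
    using FTC_exp_pos[OF True] by simp
  finally have P: "\<bar>LINT s|lborel. (if 0 \<le> s \<and> s \<le> t then h s * exp s else 0)\<bar> \<le> C * (exp t - 1)" .
  have "\<bar>exp (- t) * (LINT s|lborel. (if 0 \<le> s \<and> s \<le> t then h s * exp s else 0))\<bar>
      \<le> exp (- t) * (C * (exp t - 1))"
    using P by (simp add: abs_mult)
  also have "\<dots> = C * (1 - exp (- t))" by (simp add: algebra_simps exp_minus_inverse)
  also have "\<dots> \<le> C" using C0 by (simp add: mult_left_le)
  finally show ?thesis .
qed

lemma I_bound:
  fixes h :: "real \<Rightarrow> real"
  assumes hm[measurable]: "h \<in> borel_measurable borel" and hb: "\<And>t. \<bar>h t\<bar> \<le> C" and th: "0 \<le> \<theta>"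
  shows "\<bar>LINT t|lborel. (if x \<le> t \<and> t \<le> x + \<theta> then h t else 0)\<bar> \<le> C * \<theta>"
proof -
  have C0: "0 \<le> C" using hb[of 0] by simp
  have "\<bar>LINT t|lborel. (if x \<le> t \<and> t \<le> x + \<theta> then h t else 0)\<bar>
      \<le> (LINT t|lborel. \<bar>if x \<le> t \<and> t \<le> x + \<theta> then h t else 0\<bar>)"
    by (rule integral_abs_bound)
  also have "\<dots> \<le> (LINT t|lborel. C * indicator {x..x+\<theta>} t)"
  proof (rule integral_mono)
    show "integrable lborel (\<lambda>t. \<bar>if x \<le> t \<and> t \<le> x + \<theta> then h t else 0\<bar>)"
      by (intro integrable_abs integrable_box_bound[OF hm hb])
    show "integrable lborel (\<lambda>t. C * indicator {x..x+\<theta>} t)"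
      by (intro integrable_mult_right integrable_real_indicator) (auto simp: emeasure_lborel_Icc_eq)
    fix t
    show "\<bar>if x \<le> t \<and> t \<le> x + \<theta> then h t else 0\<bar> \<le> C * indicator {x..x+\<theta>} t"
      using hb[of t] C0 by (auto simp: indicator_def)
  qed
  also have "\<dots> = C * \<theta>" using th by simp
  finally show ?thesis .
qed

lemma I_add:
  fixes h :: "real \<Rightarrow> real"
  assumes hm[measurable]: "h \<in> borel_measurable borel" and hb: "\<And>t. \<bar>h t\<bar> \<le> C" and a: "0 \<le> a" and b: "0 \<le> b"
  shows "(LINT t|lborel. (if x \<le> t \<and> t \<le> x + (a + b) then h t else 0))
    = (LINT t|lborel. (if x \<le> t \<and> t \<le> x + a then h t else 0)) + (LINT t|lborel. (if x + a \<le> t \<and> t \<le> x + a + b then h t else 0))"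
proof -
  have int2: "integrable lborel (\<lambda>s. if x + a < s \<and> s \<le> x + a + b then h s else 0)"
  proof -
    have "integrable lborel (\<lambda>s. if x + a \<le> s \<and> s \<le> x + a + b then h s else 0)"
      by (rule integrable_box_bound[OF hm hb])
    moreover have "(\<lambda>s. if x + a < s \<and> s \<le> x + a + b then h s else 0) = (\<lambda>s. (if x + a \<le> s \<and> s \<le> x + a + b then h s else 0) * indicator {x+a<..} s)"
      by (auto simp: indicator_def fun_eq_iff)
    ultimately show ?thesis using integrable_real_mult_indicator[of "{x+a<..}" lborel] by auto
  qed
  have "(\<lambda>t. if x \<le> t \<and> t \<le> x + (a + b) then h t else 0)
    = (\<lambda>t. (if x \<le> t \<and> t \<le> x + a then h t else 0) + (if x + a < t \<and> t \<le> x + a + b then h t else 0))"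
    using a b by (auto simp: fun_eq_iff)
  then have "(LINT t|lborel. (if x \<le> t \<and> t \<le> x + (a + b) then h t else 0))
    = (LINT t|lborel. (if x \<le> t \<and> t \<le> x + a then h t else 0)) + (LINT t|lborel. (if x + a < t \<and> t \<le> x + a + b then h t else 0))"
    by (simp add: Bochner_Integration.integral_add[OF integrable_box_bound[OF hm hb] int2])
  also have "(LINT t|lborel. (if x + a < t \<and> t \<le> x + a + b then h t else 0)) = (LINT t|lborel. (if x + a \<le> t \<and> t \<le> x + a + b then h t else 0))"
    by (rule integral_cong_AE) (auto intro!: eventually_mono[OF AE_lborel_singleton[of "x+a"]])
  finally show ?thesis .
qed


lemma I_F:
  fixes h :: "real \<Rightarrow> real"
  assumes hm[measurable]: "h \<in> borel_measurable borel" and hb: "\<And>t. \<bar>h t\<bar> \<le> C"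
  defines "Fx \<equiv> \<lambda>t. exp (- t) * (LINT s|lborel. (if 0 \<le> s \<and> s \<le> t then h s * exp s else 0))"
  assumes x0: "0 \<le> x0" and Fc: "\<And>t. x0 \<le> t \<Longrightarrow> Fx t \<le> c" and x: "x0 \<le> x" and th: "0 \<le> \<theta>"
  shows "(LINT t|lborel. (if x \<le> t \<and> t \<le> x + \<theta> then h t else 0)) \<le> 2*C + c*\<theta>"
proof -
  have x0': "0 \<le> x" using x0 x by simp
  note K = key_identity[OF hm hb x0' th]
  have "(LINT t|lborel. (if x \<le> t \<and> t \<le> x + \<theta> then Fx t else 0)) \<le> (LINT t|lborel. c * indicator {x..x+\<theta>} t)"
  proof (rule integral_mono)
    show "integrable lborel (\<lambda>t. if x \<le> t \<and> t \<le> x + \<theta> then Fx t else 0)"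
      using K(1) unfolding Fx_def by simp
    show "integrable lborel (\<lambda>t. c * indicator {x..x+\<theta>} t)"
      by (intro integrable_mult_right integrable_real_indicator) (auto simp: emeasure_lborel_Icc_eq)
    fix t
    show "(if x \<le> t \<and> t \<le> x + \<theta> then Fx t else 0) \<le> c * indicator {x..x+\<theta>} t"
      using Fc[of t] x by (auto simp: indicator_def)
  qed
  also have "\<dots> = c * \<theta>" using th by simp
  finally have J: "(LINT t|lborel. (if x \<le> t \<and> t \<le> x + \<theta> then Fx t else 0)) \<le> c * \<theta>" .
  have F1: "Fx (x + \<theta>) \<le> C" and F2: "- Fx x \<le> C"
    using Fx_bound[OF hm hb, of "x+\<theta>"] Fx_bound[OF hm hb, of x] unfolding Fx_def by auto
  have "(LINT t|lborel. (if x \<le> t \<and> t \<le> x + \<theta> then h t else 0))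
     = Fx (x + \<theta>) - Fx x + (LINT t|lborel. (if x \<le> t \<and> t \<le> x + \<theta> then Fx t else 0))"
    using K(2) unfolding Fx_def by simp
  with J F1 F2 show ?thesis by linarith
qed


theorem theorem3p5:
  fixes f :: "real \<Rightarrow> real"
  assumes "f \<in> Linf_Rplus"
  shows "M1_upper f \<le> R_upper f"
proof -
  obtain C0 where meas: "f \<in> borel_measurable (restrict_space lebesgue {0..})"
    and bnd: "AE t in lebesgue. t \<ge> 0 \<longrightarrow> \<bar>f t\<bar> \<le> C0"
    using assms unfolding Linf_Rplus_def by auto
  define C where "C = max C0 1"
  have C: "0 < C" by (simp add: C_def)
  have m1: "(\<lambda>t. indicator {0..} t *\<^sub>R f t) \<in> borel_measurable lebesgue"
    using meas by (subst (asm) borel_measurable_restrict_space_iff) auto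
  obtain g' where g'm: "g' \<in> borel_measurable lborel"
    and g'ae: "AE t in lborel. indicator {0..} t *\<^sub>R f t = g' t"
    using completion_ex_borel_measurable_real[OF m1] by auto
  have bnd': "AE t in lborel. t \<ge> 0 \<longrightarrow> \<bar>f t\<bar> \<le> C0"
    using bnd by (simp add: AE_completion_iff)
  define h where "h t = (if 0 \<le> t then max (- C) (min C (g' t)) else 0)" for t
  have g'b[measurable]: "g' \<in> borel_measurable borel" using g'm by simp
  have hm[measurable]: "h \<in> borel_measurable borel" unfolding h_def by measurable
  have hb: "\<bar>h t\<bar> \<le> C" for t using C by (auto simp: h_def)
  have hae: "AE t in lborel. 0 \<le> t \<longrightarrow> f t = h t"
    using g'ae bnd'
  proof eventually_elim
    case (elim t)
    show ?case
    proof
      assume t: "0 \<le> t"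
      then have "g' t = f t" "\<bar>f t\<bar> \<le> C0" using elim by auto
      then show "f t = h t" using t by (auto simp: h_def C_def)
    qed
  qed
  have hae_leb: "AE t in lebesgue. 0 \<le> t \<longrightarrow> f t = h t"
    using hae by (simp add: AE_completion_iff)
  have conv: "(LINT t:{a..b}|lebesgue. f t * w t) = (LINT t|lborel. (if a \<le> t \<and> t \<le> b then h t * w t else 0))"
    if a: "0 \<le> a" and wm[measurable]: "w \<in> borel_measurable borel" for a b w
  proof -
    have eq1: "(\<lambda>t. indicator {a..b} t *\<^sub>R (f t * w t)) = (\<lambda>t. (indicator {0..} t *\<^sub>R f t) * (indicator {a..b} t * w t))"
      using a by (auto simp: indicator_def fun_eq_iff)
    have "(\<lambda>t. (indicator {0..} t *\<^sub>R f t) * (indicator {a..b} t * w t)) \<in> borel_measurable lebesgue"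
      using m1 by (intro borel_measurable_times) (auto intro!: measurable_completion)
    then have M1: "(\<lambda>t. indicator {a..b} t *\<^sub>R (f t * w t)) \<in> borel_measurable lebesgue"
      by (simp only: eq1)
    have M2: "(\<lambda>t. if a \<le> t \<and> t \<le> b then h t * w t else 0) \<in> borel_measurable lborel"
      by measurable
    have "(LINT t:{a..b}|lebesgue. f t * w t) = (LINT t|lebesgue. indicator {a..b} t *\<^sub>R (f t * w t))"
      by (simp add: set_lebesgue_integral_def)
    also have "\<dots> = (LINT t|lebesgue. (if a \<le> t \<and> t \<le> b then h t * w t else 0))"
    proof (rule integral_cong_AE[OF M1])
      show "(\<lambda>t. if a \<le> t \<and> t \<le> b then h t * w t else 0) \<in> borel_measurable lebesgue"
        using M2 by (rule measurable_completion)
      show "AE t in lebesgue. indicator {a..b} t *\<^sub>R (f t * w t) = (if a \<le> t \<and> t \<le> b then h t * w t else 0)"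
        using hae_leb by eventually_elim (use a in \<open>auto simp: indicator_def\<close>)
    qed
    also have "\<dots> = (LINT t|lborel. (if a \<le> t \<and> t \<le> b then h t * w t else 0))"
      using M2 by (rule integral_completion)
    finally show ?thesis .
  qed
  define I where "I x \<theta> = (LINT t|lborel. (if x \<le> t \<and> t \<le> x + \<theta> then h t else 0))" for x \<theta>
  define Fx where "Fx t = exp (- t) * (LINT s|lborel. (if 0 \<le> s \<and> s \<le> t then h s * exp s else 0))" for t
  have convI: "(LINT t:{x..x+\<theta>}|lebesgue. f t) = I x \<theta>" if "0 \<le> x" for x \<theta>
  proof -
    have e: "(\<lambda>t. if x \<le> t \<and> t \<le> x + \<theta> then h t * 1 else 0) = (\<lambda>t. if x \<le> t \<and> t \<le> x + \<theta> then h t else 0)"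
      by (simp only: mult_1_right)
    show ?thesis using conv[where a=x and b="x+\<theta>" and w="\<lambda>_. 1", OF that borel_measurable_const] unfolding I_def e by (simp only: mult_1_right)
  qed
  have convF: "exp (- x) * (LINT t:{0..x}|lebesgue. f t * exp t) = Fx x" for x
    using conv[of 0 exp x] by (simp add: Fx_def)
  have M1eq: "M1_upper f = Lim at_top (\<lambda>\<theta>. Limsup at_top (\<lambda>x. ereal ((1/\<theta>) * I x \<theta>)))"
  proof -
    have "(\<lambda>\<theta>. Limsup at_top (\<lambda>x::real. ereal ((1 / \<theta>) * (LINT t:{x..x+\<theta>}|lebesgue. f t))))
        = (\<lambda>\<theta>. Limsup at_top (\<lambda>x. ereal ((1/\<theta>) * I x \<theta>)))"
    proof
      fix \<theta> :: real
      show "Limsup at_top (\<lambda>x::real. ereal ((1 / \<theta>) * (LINT t:{x..x+\<theta>}|lebesgue. f t)))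
          = Limsup at_top (\<lambda>x. ereal ((1/\<theta>) * I x \<theta>))"
        by (rule Limsup_eq) (use eventually_ge_at_top[of "0::real"] in \<open>eventually_elim, simp add: convI\<close>)
    qed
    then show ?thesis unfolding M1_upper_def by simp
  qed
  have Req: "R_upper f = Limsup at_top (\<lambda>x. ereal (Fx x))"
    unfolding R_upper_def by (simp add: convF)
  show ?thesis unfolding M1eq Req
  proof (rule abstract_main[OF C])
    show "\<bar>I x \<theta>\<bar> \<le> C * \<theta>" if "0 \<le> x" "0 \<le> \<theta>" for x \<theta>
      unfolding I_def by (rule I_bound[OF hm hb that(2)])
    show "I x (a + b) = I x a + I (x + a) b" if "0 \<le> x" "0 \<le> a" "0 \<le> b" for x a b
      unfolding I_def by (rule I_add[OF hm hb that(2,3)])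
    show "\<bar>Fx t\<bar> \<le> C" if "0 \<le> t" for t
      unfolding Fx_def by (rule Fx_bound[OF hm hb])
    show "I x \<theta> \<le> 2 * C + c * \<theta>"
      if "0 \<le> x0" "\<And>t. x0 \<le> t \<Longrightarrow> Fx t \<le> c" "x0 \<le> x" "0 \<le> \<theta>" for x0 c x \<theta>
      unfolding I_def by (rule I_F[OF hm hb that(1) _ that(3,4)]) (use that(2) in \<open>simp add: Fx_def\<close>)
  qed
qed

end
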